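(* Let $0<\alpha<d$, $1\leq p<d/\alpha$, $f\in L^p(\mathbb{R}^d)$, and let $x\in\mathbb{R}^d$ be a Lebesgue point of $f$. Then $\mathcal{B}^c_\alpha(x)$ and $\mathcal{B}^u_\alpha(x)$ are nonempty; that is, (centered case) there is a largest $r>0$ with $\mathrm{M}^c_\alpha f(x)=r^\alpha f_{B(x,r)}$, and (uncentered case) there is a ball $B$ with $x\in\overline B$ and $r(B)^\alpha f_B=\mathrm{M}^u_\alpha f(x)$ such that $r(A)^\alpha f_A<\mathrm{M}^u_\alpha f(x)$ for all balls $A\supsetneq B$.
   Context: $f_B=\frac1{|B|}\int_B|f|$, $r(B)$ is the radius of the ball $B$, $\overline B$ its closure. $\mathrm{M}^c_\alpha f(x)=\sup_{r>0}r^\alpha f_{B(x,r)}$ and $\mathrm{M}^u_\alpha f(x)=\sup_{B\ni x}r(B)^\alpha f_B$ over balls containing $x$. $\mathcal{B}^c_\alpha(x)=\{B(x,r)\}$ with $r$ the largest radius attaining $\mathrm{M}^c_\alpha f(x)=r^\alpha f_{B(x,r)}$; $\mathcal{B}^u_\alpha(x)$ is the set of balls $B$ with $x\in\overline B$, $r(B)^\alpha f_B=\mathrm{M}^u_\alpha f(x)$ and $r(A)^\alpha f_A<\mathrm{M}^u_\alpha f(x)$ for every ball $A\supsetneq B$. *)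

theory Defs
  imports "HOL-Analysis.Analysis"
begin

definition avg :: "('a::euclidean_space \<Rightarrow> real) \<Rightarrow> 'a set \<Rightarrow> real" where
  "avg f B = (LINT y:B|lebesgue. \<bar>f y\<bar>) / measure lebesgue B"

definition Mc :: "real \<Rightarrow> ('a::euclidean_space \<Rightarrow> real) \<Rightarrow> 'a \<Rightarrow> ereal" where
  "Mc \<alpha> f x = (SUP r\<in>{0<..}. ereal (r powr \<alpha> * avg f (ball x r)))"

definition Mu :: "real \<Rightarrow> ('a::euclidean_space \<Rightarrow> real) \<Rightarrow> 'a \<Rightarrow> ereal" where
  "Mu \<alpha> f x = (SUP cr\<in>{(c, r). 0 < r \<and> x \<in> ball c r}.
                   ereal (snd cr powr \<alpha> * avg f (ball (fst cr) (snd cr))))"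

definition in_Lp :: "real \<Rightarrow> ('a::euclidean_space \<Rightarrow> real) \<Rightarrow> bool" where
  "in_Lp p f \<longleftrightarrow> f \<in> borel_measurable lebesgue \<and> integrable lebesgue (\<lambda>y. \<bar>f y\<bar> powr p)"

definition lebesgue_point :: "('a::euclidean_space \<Rightarrow> real) \<Rightarrow> 'a \<Rightarrow> bool" where
  "lebesgue_point f x \<longleftrightarrow>
     ((\<lambda>r. (LINT y:ball x r|lebesgue. \<bar>f y - f x\<bar>) / measure lebesgue (ball x r))
        \<longlongrightarrow> 0) (at_right 0)"

end

theory Submission
  imports Defs
begin

definition FI :: "('a::euclidean_space \<Rightarrow> real) \<Rightarrow> 'a \<Rightarrow> real \<Rightarrow> real" where
  "FI f c r = (LINT y:ball c r|lebesgue. \<bar>f y\<bar>)"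

lemma meas_ball: "0 \<le> r \<Longrightarrow> measure lebesgue (ball (c::'a::euclidean_space) r) = unit_ball_vol DIM('a) * r ^ DIM('a)"
  using content_ball by auto

lemma FI_cont:
  fixes f :: "'a::euclidean_space \<Rightarrow> real"
  assumes int: "\<And>c r. set_integrable lebesgue (ball c r) (\<lambda>y. \<bar>f y\<bar>)"
    and "0 < r" and cn: "cn \<longlonglongrightarrow> c" and rn: "rn \<longlonglongrightarrow> r"
  shows "(\<lambda>n. FI f (cn n) (rn n)) \<longlonglongrightarrow> FI f c r"
proof -
  have "\<forall>\<^sub>F n in sequentially. dist (cn n) c < r"
    using cn \<open>0 < r\<close> by (simp add: tendsto_iff)
  moreover have "\<forall>\<^sub>F n in sequentially. dist (rn n) r < r"
    using rn \<open>0 < r\<close> by (simp add: tendsto_iff)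
  ultimately obtain N where N: "\<And>n. n \<ge> N \<Longrightarrow> dist (cn n) c < r \<and> dist (rn n) r < r"
    unfolding eventually_sequentially by (metis (full_types) eventually_sequentially eventually_conj)
  have intg: "integrable lebesgue (\<lambda>y. indicator (ball c' r') y * \<bar>f y\<bar>)" for c' r'
    using int[of c' r'] by (simp add: set_integrable_def)
  have sub: "ball (cn (n + N)) (rn (n + N)) \<subseteq> ball c (3 * r)" for n
  proof
    fix y assume "y \<in> ball (cn (n + N)) (rn (n + N))"
    moreover have "dist (cn (n+N)) c < r" "dist (rn (n+N)) r < r" using N[of "n+N"] by auto
    ultimately show "y \<in> ball c (3 * r)"
      by (simp add: dist_real_def) (smt (verit) dist_commute dist_triangle)
  qed
  have sph: "AE y in lebesgue. y \<notin> sphere c r"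
    by (rule AE_not_in) (metis negligible_iff_null_sets negligible_sphere)
  have "(\<lambda>n. integral\<^sup>L lebesgue (\<lambda>y. indicator (ball (cn (n + N)) (rn (n + N))) y * \<bar>f y\<bar>))
        \<longlonglongrightarrow> integral\<^sup>L lebesgue (\<lambda>y. indicator (ball c r) y * \<bar>f y\<bar>)"
  proof (rule integral_dominated_convergence[where w = "\<lambda>y. indicator (ball c (3*r)) y * \<bar>f y\<bar>"
      and s = "\<lambda>n y. indicator (ball (cn (n + N)) (rn (n + N))) y * \<bar>f y\<bar>"
      and f = "\<lambda>y. indicator (ball c r) y * \<bar>f y\<bar>"])
    show "(\<lambda>y. indicator (ball c r) y * \<bar>f y\<bar>) \<in> borel_measurable lebesgue"
      using intg by blast
    show "(\<lambda>y. indicator (ball (cn (n + N)) (rn (n + N))) y * \<bar>f y\<bar>) \<in> borel_measurable lebesgue" for n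
      using intg by blast
    show "integrable lebesgue (\<lambda>y. indicator (ball c (3*r)) y * \<bar>f y\<bar>)" by (rule intg)
    show "AE y in lebesgue. norm (indicator (ball (cn (n + N)) (rn (n + N))) y * \<bar>f y\<bar>)
             \<le> indicator (ball c (3*r)) y * \<bar>f y\<bar>" for n
      using sub[of n] by (intro AE_I2) (auto split: split_indicator)
    show "AE y in lebesgue. (\<lambda>n. indicator (ball (cn (n + N)) (rn (n + N))) y * \<bar>f y\<bar>)
             \<longlonglongrightarrow> indicator (ball c r) y * \<bar>f y\<bar>"
      using sph
    proof eventually_elim
      case (elim y)
      have lim: "(\<lambda>n. dist (cn (n+N)) y - rn (n+N)) \<longlonglongrightarrow> dist c y - r"
        using LIMSEQ_ignore_initial_segment[OF cn, of N] LIMSEQ_ignore_initial_segment[OF rn, of N]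
        by (intro tendsto_intros)
      show ?case
      proof (cases "dist c y < r")
        case True
        then have "\<forall>\<^sub>F n in sequentially. dist (cn (n+N)) y - rn (n+N) < 0"
          using order_tendstoD(2)[OF lim, of 0] by simp
        then have "\<forall>\<^sub>F n in sequentially. indicator (ball (cn (n + N)) (rn (n + N))) y * \<bar>f y\<bar>
                 = indicator (ball c r) y * \<bar>f y\<bar>"
          by eventually_elim (use True in \<open>auto simp: indicator_def\<close>)
        then show ?thesis by (rule tendsto_eventually)
      next
        case False
        with elim have F: "dist c y > r" by auto
        then have "\<forall>\<^sub>F n in sequentially. dist (cn (n+N)) y - rn (n+N) > 0"
          using order_tendstoD(1)[OF lim, of 0] by simp
        then have "\<forall>\<^sub>F n in sequentially. indicator (ball (cn (n + N)) (rn (n + N))) y * \<bar>f y\<bar>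
                 = indicator (ball c r) y * \<bar>f y\<bar>"
          by eventually_elim (use F in \<open>auto simp: indicator_def\<close>)
        then show ?thesis by (rule tendsto_eventually)
      qed
    qed
  qed
  then have "(\<lambda>n. FI f (cn (n + N)) (rn (n + N))) \<longlonglongrightarrow> FI f c r"
    by (simp add: FI_def set_lebesgue_integral_def)
  then show ?thesis by (rule LIMSEQ_offset)
qed

lemma pt_ineq:
  fixes y t p :: real
  assumes "0 < t" "1 \<le> p"
  shows "\<bar>y\<bar> \<le> t + t powr (1-p) * \<bar>y\<bar> powr p"
proof (cases "\<bar>y\<bar> \<le> t")
  case True
  then show ?thesis by (simp add: add_increasing2)
next
  case False
  then have y: "\<bar>y\<bar> > t" by simp
  have "t powr (1-p) * \<bar>y\<bar> powr p = \<bar>y\<bar> * (\<bar>y\<bar>/t) powr (p-1)"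
  proof -
    have "\<bar>y\<bar> powr p = \<bar>y\<bar> * \<bar>y\<bar> powr (p-1)"
      using y assms by (simp add: powr_add[symmetric] powr_mult_base)
    moreover have "(\<bar>y\<bar>/t) powr (p-1) = \<bar>y\<bar> powr (p-1) / t powr (p-1)"
      using y assms by (simp add: powr_divide)
    moreover have "t powr (1-p) = 1 / t powr (p-1)"
      using assms by (simp add: powr_minus_divide[symmetric])
    ultimately show ?thesis by simp
  qed
  moreover have "(\<bar>y\<bar>/t) powr (p-1) \<ge> 1"
    using y assms by (intro ge_one_powr_ge_zero) auto
  ultimately have "t powr (1-p) * \<bar>y\<bar> powr p \<ge> \<bar>y\<bar>"
    using y assms by (metis abs_ge_zero mult.right_neutral mult_left_mono)
  then show ?thesis using assms by simp
qed

lemma loc_int: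
  fixes f :: "'a::euclidean_space \<Rightarrow> real"
  assumes "in_Lp p f" "1 \<le> p"
  shows "set_integrable lebesgue (ball c r) (\<lambda>y. \<bar>f y\<bar>)"
  unfolding set_integrable_def
proof (rule Bochner_Integration.integrable_bound[where f = "\<lambda>y. indicat_real (ball c r) y + \<bar>f y\<bar> powr p"])
  have m: "f \<in> borel_measurable lebesgue" and i: "integrable lebesgue (\<lambda>y. \<bar>f y\<bar> powr p)"
    using assms by (auto simp: in_Lp_def)
  show "integrable lebesgue (\<lambda>y. indicat_real (ball c r) y + \<bar>f y\<bar> powr p)"
  proof (rule Bochner_Integration.integrable_add[OF _ i])
    have "ball c r \<in> fmeasurable lebesgue" using lmeasurable_ball by blast
    then show "integrable lebesgue (indicat_real (ball c r))"
      by (intro integrable_real_indicator) (auto simp: fmeasurable_def)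
  qed
  show "(\<lambda>y. indicat_real (ball c r) y *\<^sub>R \<bar>f y\<bar>) \<in> borel_measurable lebesgue"
    using m lmeasurable_ball[of c r]
    by (intro borel_measurable_scaleR borel_measurable_indicator borel_measurable_abs) (auto simp: fmeasurable_def)
  show "AE y in lebesgue. norm (indicat_real (ball c r) y *\<^sub>R \<bar>f y\<bar>)
     \<le> norm (indicat_real (ball c r) y + \<bar>f y\<bar> powr p)"
  proof (intro AE_I2)
    fix y
    have "\<bar>f y\<bar> \<le> 1 + 1 powr (1-p) * \<bar>f y\<bar> powr p" by (rule pt_ineq) (use assms in auto)
    then show "norm (indicat_real (ball c r) y *\<^sub>R \<bar>f y\<bar>)
     \<le> norm (indicat_real (ball c r) y + \<bar>f y\<bar> powr p)"
      by (auto split: split_indicator)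
  qed
qed

lemma avg_large:
  fixes f :: "'a::euclidean_space \<Rightarrow> real"
  assumes Lp: "in_Lp p f" and p: "1 \<le> p" and r: "0 < r"
  shows "avg f (ball c r) \<le> r powr (- real DIM('a)/p) *
           (1 + integral\<^sup>L lebesgue (\<lambda>y. \<bar>f y\<bar> powr p) / unit_ball_vol (real DIM('a)))"
proof -
  define d where "d = real DIM('a)"
  define \<omega> where "\<omega> = unit_ball_vol d"
  define P where "P = integral\<^sup>L lebesgue (\<lambda>y. \<bar>f y\<bar> powr p)"
  define t where "t = r powr (-d/p)"
  have t: "t > 0" using r by (simp add: t_def)
  have om: "\<omega> > 0" by (simp add: \<omega>_def d_def)
  have m: "measure lebesgue (ball c r) = \<omega> * r powr d"
    using meas_ball[of r c] r by (simp add: \<omega>_def d_def powr_realpow)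
  have i: "integrable lebesgue (\<lambda>y. \<bar>f y\<bar> powr p)" and fm: "f \<in> borel_measurable lebesgue"
    using Lp by (auto simp: in_Lp_def)
  have bl: "ball c r \<in> sets lebesgue" "emeasure lebesgue (ball c r) < \<infinity>"
    using lmeasurable_ball[of c r] by (auto simp: fmeasurable_def)
  have ii: "integrable lebesgue (\<lambda>y. indicator (ball c r) y * \<bar>f y\<bar> powr p)"
    using integrable_real_mult_indicator[OF bl(1) i] by (simp add: mult.commute)
  have ind: "integrable lebesgue (indicat_real (ball c r))"
    using bl by (intro integrable_real_indicator) auto
  have "FI f c r = integral\<^sup>L lebesgue (\<lambda>y. indicator (ball c r) y * \<bar>f y\<bar>)"
    by (simp add: FI_def set_lebesgue_integral_def)
  also have "\<dots> \<le> integral\<^sup>L lebesgue (\<lambda>y. t * indicator (ball c r) y + t powr (1-p) * (indicator (ball c r) y * \<bar>f y\<bar> powr p))"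
  proof (rule integral_mono)
    show "integrable lebesgue (\<lambda>y. indicator (ball c r) y * \<bar>f y\<bar>)"
      using loc_int[OF Lp p, of c r] by (simp add: set_integrable_def)
    show "integrable lebesgue (\<lambda>y. t * indicator (ball c r) y + t powr (1-p) * (indicator (ball c r) y * \<bar>f y\<bar> powr p))"
      using ind ii by simp
    fix y
    show "indicator (ball c r) y * \<bar>f y\<bar> \<le> t * indicator (ball c r) y + t powr (1-p) * (indicator (ball c r) y * \<bar>f y\<bar> powr p)"
      using pt_ineq[OF t p, of "f y"] by (auto split: split_indicator)
  qed
  also have "\<dots> = t * measure lebesgue (ball c r) + t powr (1-p) * integral\<^sup>L lebesgue (\<lambda>y. indicator (ball c r) y * \<bar>f y\<bar> powr p)"
    using ind ii bl by simp
  also have "\<dots> \<le> t * measure lebesgue (ball c r) + t powr (1-p) * P"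
  proof -
    have "integral\<^sup>L lebesgue (\<lambda>y. indicator (ball c r) y * \<bar>f y\<bar> powr p) \<le> P"
      unfolding P_def using ii i by (intro integral_mono) (auto split: split_indicator)
    then show ?thesis by (simp add: mult_left_mono)
  qed
  finally have F: "FI f c r \<le> t * (\<omega> * r powr d) + t powr (1-p) * P" by (simp add: m)
  have tp: "t powr (1-p) = t * r powr d"
  proof -
    have e: "- d / p * (1 - p) = - d / p + d" using p by (simp add: field_simps)
    have "t powr (1-p) = r powr (- d / p * (1 - p))" unfolding t_def using r by (simp add: powr_powr)
    also have "\<dots> = r powr (-d/p) * r powr d" by (simp only: e powr_add)
    finally show ?thesis by (simp add: t_def)
  qed
  have "avg f (ball c r) = FI f c r / (\<omega> * r powr d)"
    by (simp add: avg_def FI_def m)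
  also have "\<dots> \<le> (t * (\<omega> * r powr d) + t powr (1-p) * P) / (\<omega> * r powr d)"
    using F om r by (intro divide_right_mono) auto
  also have "\<dots> = t * (1 + P / \<omega>)"
    using om r by (simp add: tp field_simps)
  finally show ?thesis by (simp add: t_def P_def \<omega>_def d_def)
qed

lemma FI_nonneg: "FI f c r \<ge> 0"
  unfolding FI_def set_lebesgue_integral_def by (intro integral_nonneg_AE) (auto simp: indicator_def)

lemma FI_pos:
  fixes f :: "'a::euclidean_space \<Rightarrow> real"
  assumes Lp: "in_Lp p f" and p: "1 \<le> p" and nz: "\<not> (AE y in lebesgue. f y = 0)"
  shows "\<exists>R>0. FI f x R > 0"
proof (rule ccontr)
  assume "\<not> ?thesis"
  then have z: "FI f x R = 0" if "R > 0" for R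
    using FI_nonneg[of f x R] that by force
  have "AE y in lebesgue. indicator (ball x (Suc n)) y * \<bar>f y\<bar> = 0" for n
  proof -
    have i: "integrable lebesgue (\<lambda>y. indicator (ball x (Suc n)) y * \<bar>f y\<bar>)"
      using loc_int[OF Lp p, of x "Suc n"] by (simp add: set_integrable_def)
    have "integral\<^sup>L lebesgue (\<lambda>y. indicator (ball x (Suc n)) y * \<bar>f y\<bar>) = 0"
      using z[of "Suc n"] by (simp add: FI_def set_lebesgue_integral_def)
    then show ?thesis using integral_nonneg_eq_0_iff_AE[OF i] by simp
  qed
  then have "AE y in lebesgue. \<forall>n. indicator (ball x (Suc n)) y * \<bar>f y\<bar> = 0"
    by (subst AE_all_countable) blast
  then have "AE y in lebesgue. f y = 0"
  proof eventually_elim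
    case (elim y)
    obtain n where "dist x y < real n" using reals_Archimedean2 by blast
    then have "y \<in> ball x (Suc n)" by simp
    with elim[rule_format, of n] show ?case by simp
  qed
  with nz show False by simp
qed

lemma small:
  fixes f :: "'a::euclidean_space \<Rightarrow> real"
  assumes Lp: "in_Lp p f" and p: "1 \<le> p" and lp: "lebesgue_point f x" and e: "\<epsilon> > 0" and a: "\<alpha> > 0"
  shows "\<exists>\<delta>>0. \<forall>c r. 0 < r \<and> r < \<delta> \<and> dist c x \<le> r \<longrightarrow> r powr \<alpha> * avg f (ball c r) < \<epsilon>"
proof -
  define A where "A = (\<lambda>r. (LINT y:ball x r|lebesgue. \<bar>f y - f x\<bar>) / measure lebesgue (ball x r))"
  have "(A \<longlongrightarrow> 0) (at_right 0)" using lp by (simp add: lebesgue_point_def A_def)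
  then have "\<forall>\<^sub>F r in at_right 0. A r < 1" by (rule order_tendstoD) simp
  then obtain b where b: "b > 0" "\<And>r. 0 < r \<Longrightarrow> r < b \<Longrightarrow> A r < 1"
    unfolding eventually_at_right_field by auto
  define \<omega> where "\<omega> = unit_ball_vol (real DIM('a))"
  have om: "\<omega> > 0" by (simp add: \<omega>_def)
  define K where "K = 2 ^ DIM('a) * (1 + \<bar>f x\<bar>)"
  have K: "K > 0" by (simp add: K_def add_pos_nonneg)
  define \<delta> where "\<delta> = min (b/2) ((\<epsilon>/K) powr (1/\<alpha>))"
  have d: "\<delta> > 0" using b e K by (simp add: \<delta>_def)
  have fm: "f \<in> borel_measurable lebesgue" using Lp by (simp add: in_Lp_def)
  have main: "r powr \<alpha> * avg f (ball c r) < \<epsilon>" if r: "0 < r" "r < \<delta>" "dist c x \<le> r" for c r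
  proof -
    have sub: "ball c r \<subseteq> ball x (2*r)"
    proof
      fix y assume "y \<in> ball c r"
      then show "y \<in> ball x (2*r)" using r(3) by (simp add: dist_commute) (smt (verit) dist_triangle dist_commute)
    qed
    have bl: "ball x (2*r) \<in> sets lebesgue" "emeasure lebesgue (ball x (2*r)) < \<infinity>"
      using lmeasurable_ball[of x "2*r"] by (auto simp: fmeasurable_def)
    have i1: "integrable lebesgue (\<lambda>y. indicator (ball c' s) y * \<bar>f y\<bar>)" for c' s
      using loc_int[OF Lp p, of c' s] by (simp add: set_integrable_def)
    have ind: "integrable lebesgue (\<lambda>y. indicator (ball x (2*r)) y * \<bar>f x\<bar>)"
      using bl by (intro integrable_mult_left integrable_real_indicator) auto
    have i2: "integrable lebesgue (\<lambda>y. indicator (ball x (2*r)) y * \<bar>f y - f x\<bar>)"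
    proof (rule Bochner_Integration.integrable_bound[OF Bochner_Integration.integrable_add[OF i1[of x "2*r"] ind]])
      show "(\<lambda>y. indicat_real (ball x (2 * r)) y * \<bar>f y - f x\<bar>) \<in> borel_measurable lebesgue"
        using fm bl by (intro borel_measurable_times borel_measurable_indicator borel_measurable_abs borel_measurable_diff) auto
      show "AE y in lebesgue. norm (indicat_real (ball x (2 * r)) y * \<bar>f y - f x\<bar>)
             \<le> norm (indicat_real (ball x (2 * r)) y * \<bar>f y\<bar> + indicat_real (ball x (2 * r)) y * \<bar>f x\<bar>)"
        by (intro AE_I2) (auto split: split_indicator)
    qed
    have mb: "measure lebesgue (ball x (2*r)) = \<omega> * (2*r) ^ DIM('a)"
      using meas_ball[of "2*r" x] r by (simp add: \<omega>_def)
    have mpos: "measure lebesgue (ball x (2*r)) > 0" using mb om r by simp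
    have "FI f c r \<le> FI f x (2*r)"
      unfolding FI_def set_lebesgue_integral_def using i1 sub
      by (intro integral_mono) (auto split: split_indicator)
    also have "\<dots> \<le> integral\<^sup>L lebesgue (\<lambda>y. indicator (ball x (2*r)) y * \<bar>f y - f x\<bar> + indicator (ball x (2*r)) y * \<bar>f x\<bar>)"
      unfolding FI_def set_lebesgue_integral_def using i1 i2 ind
      by (intro integral_mono) (auto split: split_indicator)
    also have "\<dots> = A (2*r) * measure lebesgue (ball x (2*r)) + \<bar>f x\<bar> * measure lebesgue (ball x (2*r))"
      using i2 ind mpos bl by (simp add: A_def set_lebesgue_integral_def)
    also have "\<dots> < measure lebesgue (ball x (2*r)) * (1 + \<bar>f x\<bar>)"
      using b(2)[of "2*r"] r mpos d unfolding \<delta>_def by (simp add: algebra_simps)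
    also have "\<dots> = \<omega> * r ^ DIM('a) * K"
      by (simp add: mb K_def power_mult_distrib)
    finally have F: "FI f c r < \<omega> * r ^ DIM('a) * K" .
    have "avg f (ball c r) = FI f c r / (\<omega> * r ^ DIM('a))"
      using meas_ball[of r c] r by (simp add: avg_def FI_def \<omega>_def)
    also have "\<dots> < K" using F om r by (simp add: divide_less_eq mult.commute)
    finally have av: "avg f (ball c r) < K" .
    have "r powr \<alpha> < \<delta> powr \<alpha>" using r a by (simp add: powr_less_mono2)
    also have "\<delta> powr \<alpha> \<le> ((\<epsilon>/K) powr (1/\<alpha>)) powr \<alpha>"
      using a d by (intro powr_mono2) (auto simp: \<delta>_def)
    also have "\<dots> = \<epsilon>/K" using a e K by (simp add: powr_powr)
    finally have rp: "r powr \<alpha> < \<epsilon> / K" .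
    have "r powr \<alpha> * avg f (ball c r) \<le> r powr \<alpha> * K"
      using av by (intro mult_left_mono) auto
    also have "\<dots> < \<epsilon> / K * K" using rp K by (simp only: mult_strict_right_mono)
    finally show ?thesis using K by simp
  qed
  show ?thesis using d main by blast
qed

lemma V_lim:
  fixes f :: "'a::euclidean_space \<Rightarrow> real"
  assumes Lp: "in_Lp p f" and p: "1 \<le> p" and r: "0 < r" and cn: "cn \<longlonglongrightarrow> c" and rn: "rn \<longlonglongrightarrow> r"
  shows "(\<lambda>n. rn n powr \<alpha> * avg f (ball (cn n) (rn n))) \<longlonglongrightarrow> r powr \<alpha> * avg f (ball c r)"
proof -
  define \<omega> where "\<omega> = unit_ball_vol (real DIM('a))"
  have om: "\<omega> > 0" by (simp add: \<omega>_def)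
  have eq: "s powr \<alpha> * avg f (ball c' s) = s powr \<alpha> * (FI f c' s / (\<omega> * s ^ DIM('a)))" if "s > 0" for s c'
    using meas_ball[of s c'] that by (simp add: avg_def FI_def \<omega>_def)
  have f1: "(\<lambda>n. FI f (cn n) (rn n)) \<longlonglongrightarrow> FI f c r"
    by (rule FI_cont[OF loc_int[OF Lp p] r cn rn])
  have f2: "(\<lambda>n. rn n powr \<alpha>) \<longlonglongrightarrow> r powr \<alpha>"
    using r by (intro tendsto_powr[OF rn tendsto_const]) simp
  have f3: "(\<lambda>n. \<omega> * rn n ^ DIM('a)) \<longlonglongrightarrow> \<omega> * r ^ DIM('a)"
    by (rule tendsto_mult[OF tendsto_const tendsto_power[OF rn]])
  have nz: "\<omega> * r ^ DIM('a) \<noteq> 0" using om r by simp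
  have L: "(\<lambda>n. rn n powr \<alpha> * (FI f (cn n) (rn n) / (\<omega> * rn n ^ DIM('a)))) \<longlonglongrightarrow> r powr \<alpha> * (FI f c r / (\<omega> * r ^ DIM('a)))"
    by (rule tendsto_mult[OF f2 tendsto_divide[OF f1 f3 nz]])
  have "\<forall>\<^sub>F n in sequentially. rn n > 0" using rn r by (rule order_tendstoD)
  then have E: "\<forall>\<^sub>F n in sequentially. rn n powr \<alpha> * (FI f (cn n) (rn n) / (\<omega> * rn n ^ DIM('a))) = rn n powr \<alpha> * avg f (ball (cn n) (rn n))"
    by eventually_elim (simp add: eq)
  have "(\<lambda>n. rn n powr \<alpha> * avg f (ball (cn n) (rn n))) \<longlonglongrightarrow> r powr \<alpha> * (FI f c r / (\<omega> * r ^ DIM('a)))"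
    by (rule Lim_transform_eventually[OF L E])
  then show ?thesis by (simp only: eq[OF r])
qed

lemma large:
  fixes f :: "'a::euclidean_space \<Rightarrow> real"
  assumes Lp: "in_Lp p f" and p: "1 \<le> p" and a: "0 < \<alpha>" and pd: "p < real DIM('a) / \<alpha>" and e: "\<epsilon> > 0"
  shows "\<exists>R>0. \<forall>c r. r \<ge> R \<longrightarrow> r powr \<alpha> * avg f (ball c r) < \<epsilon>"
proof -
  define C where "C = 1 + integral\<^sup>L lebesgue (\<lambda>y. \<bar>f y\<bar> powr p) / unit_ball_vol (real DIM('a))"
  have "integral\<^sup>L lebesgue (\<lambda>y. \<bar>f y\<bar> powr p) \<ge> 0" by (intro integral_nonneg_AE) auto
  then have C: "C \<ge> 1" by (simp add: C_def)
  have "\<alpha> * p < real DIM('a)" using pd a by (simp add: pos_less_divide_eq mult.commute)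
  then have "\<alpha> < real DIM('a) / p" using p by (simp add: pos_less_divide_eq)
  then have neg: "\<alpha> - real DIM('a) / p < 0" by simp
  have "((\<lambda>r. r powr (\<alpha> - real DIM('a) / p)) \<longlongrightarrow> 0) at_top"
    by (rule tendsto_neg_powr[OF neg filterlim_ident])
  then have "\<forall>\<^sub>F r in at_top. r powr (\<alpha> - real DIM('a) / p) < \<epsilon> / C"
    by (rule order_tendstoD(2)) (use e C in simp)
  then obtain R where R: "\<And>r. r \<ge> R \<Longrightarrow> r powr (\<alpha> - real DIM('a) / p) < \<epsilon> / C"
    unfolding eventually_at_top_linorder by blast
  have "r powr \<alpha> * avg f (ball c r) < \<epsilon>" if r: "r \<ge> max R 1" for c r
  proof -
    have r0: "r > 0" using r by simp
    have "r powr \<alpha> * avg f (ball c r) \<le> r powr \<alpha> * (r powr (- real DIM('a)/p) * C)"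
      using avg_large[OF Lp p r0, of c] by (intro mult_left_mono) (auto simp: C_def)
    also have "\<dots> = r powr (\<alpha> - real DIM('a) / p) * C"
    proof -
      have "r powr (\<alpha> + (- real DIM('a)/p)) = r powr \<alpha> * r powr (- real DIM('a)/p)" by (rule powr_add)
      moreover have "\<alpha> + (- real DIM('a)/p) = \<alpha> - real DIM('a) / p" by simp
      ultimately show ?thesis by (metis mult.assoc)
    qed
    also have "\<dots> < \<epsilon> / C * C" using R[of r] r C by (intro mult_strict_right_mono) auto
    finally show ?thesis using C by simp
  qed
  then show ?thesis by (intro exI[of _ "max R 1"]) auto
qed

lemma ball_strict:
  fixes c :: "'a::euclidean_space"
  assumes "0 < r" "ball c r \<subset> ball c' r'"
  shows "r < r' \<and> dist c c' + r \<le> r'"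
proof -
  have h: "dist c c' + r \<le> r'" using assms ball_subset_ball_iff[of c r c' r'] by auto
  have "r \<noteq> r'"
  proof
    assume "r = r'"
    then have "c = c'" using h by simp
    with \<open>r = r'\<close> assms show False by simp
  qed
  with h show ?thesis by (smt (verit) zero_le_dist)
qed

theorem lemma2p2:
  fixes f :: "'a::euclidean_space \<Rightarrow> real" and x :: 'a and \<alpha> p :: real
  assumes "0 < \<alpha>" "\<alpha> < real DIM('a)"
    and "1 \<le> p" "p < real DIM('a) / \<alpha>"
    and "in_Lp p f"
    and "\<not> (AE y in lebesgue. f y = 0)"
    and "lebesgue_point f x"
  shows "(\<exists>r>0. ereal (r powr \<alpha> * avg f (ball x r)) = Mc \<alpha> f x \<and>
            (\<forall>s>r. ereal (s powr \<alpha> * avg f (ball x s)) \<noteq> Mc \<alpha> f x)) \<and>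
         (\<exists>c r. 0 < r \<and> x \<in> closure (ball c r) \<and>
            ereal (r powr \<alpha> * avg f (ball c r)) = Mu \<alpha> f x \<and>
            (\<forall>c' r'. 0 < r' \<and> ball c r \<subset> ball c' r' \<longrightarrow>
                ereal (r' powr \<alpha> * avg f (ball c' r')) < Mu \<alpha> f x))"
proof -
  note a = assms(1) and p = assms(3) and pd = assms(4) and Lp = assms(5) and nz = assms(6) and lp = assms(7)
  define V where "V = (\<lambda>c r. r powr \<alpha> * avg f (ball c r))"
  have Vlim: "(\<lambda>n. V (cn n) (rn n)) \<longlonglongrightarrow> V c r" if "0 < r" "cn \<longlonglongrightarrow> c" "rn \<longlonglongrightarrow> r" for cn rn c r
    unfolding V_def by (rule V_lim[OF Lp p that])
  obtain R0 where R0: "R0 > 0" "FI f x R0 > 0" using FI_pos[OF Lp p nz] by blast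
  define v0 where "v0 = V x R0"
  have v0: "v0 > 0"
  proof -
    have "measure lebesgue (ball x R0) > 0"
      using meas_ball[of R0 x] R0 by simp
    then show ?thesis using R0 by (simp add: v0_def V_def avg_def FI_def)
  qed
  obtain \<delta> where d: "\<delta> > 0" "\<And>c r. 0 < r \<Longrightarrow> r < \<delta> \<Longrightarrow> dist c x \<le> r \<Longrightarrow> V c r < v0"
    using small[OF Lp p lp v0 a] unfolding V_def by blast
  obtain R1 where R1: "R1 > 0" "\<And>c r. r \<ge> R1 \<Longrightarrow> V c r < v0"
    using large[OF Lp p a pd v0] unfolding V_def by blast
  have dR0: "\<delta> \<le> R0" using d(2)[of R0 x] R0 by (force simp: v0_def)
  have R0R1: "R0 < R1" using R1(2)[of R0 x] by (force simp: v0_def)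
  define K where "K = {z::'a \<times> real. \<delta> \<le> snd z \<and> snd z \<le> R1 \<and> dist (fst z) x \<le> snd z}"
  have cK: "compact K"
  proof -
    have "closed K" unfolding K_def
      by (intro closed_Collect_conj closed_Collect_le continuous_intros)
    moreover have "K \<subseteq> cball x R1 \<times> cball 0 R1"
      using d(1) by (auto simp: K_def dist_commute)
    then have "bounded K" by (rule bounded_subset[OF bounded_Times[OF bounded_cball bounded_cball]])
    ultimately show ?thesis by (simp add: compact_eq_bounded_closed)
  qed
  have contK: "continuous_on K (\<lambda>z. V (fst z) (snd z))"
  proof (rule continuous_on_sequentiallyI)
    fix u a assume "\<forall>n. u n \<in> K" "a \<in> K" "u \<longlonglongrightarrow> a"
    then show "(\<lambda>n. V (fst (u n)) (snd (u n))) \<longlonglongrightarrow> V (fst a) (snd a)"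
      using d(1) by (intro Vlim tendsto_fst tendsto_snd) (auto simp: K_def)
  qed
  have x0K: "(x, R0) \<in> K" using dR0 R0R1 R0(1) by (simp add: K_def)
  obtain z1 where z1: "z1 \<in> K" "\<And>z. z \<in> K \<Longrightarrow> V (fst z) (snd z) \<le> V (fst z1) (snd z1)"
    using continuous_attains_sup[OF cK _ contK] x0K by blast
  define m where "m = V (fst z1) (snd z1)"
  have mv0: "m \<ge> v0" using z1(2)[OF x0K] by (simp add: m_def v0_def)
  have bound: "V c r \<le> m" if "0 < r" "dist c x \<le> r" for c r
  proof (cases "r < \<delta>")
    case True then show ?thesis using d(2)[OF that(1) True that(2)] mv0 by simp
  next
    case False
    show ?thesis
    proof (cases "r \<ge> R1")
      case True then show ?thesis using R1(2)[OF True, of c] mv0 by simp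
    next
      case False2: False
      then have "(c, r) \<in> K" using False that by (simp add: K_def)
      then show ?thesis using z1(2) by (force simp: m_def)
    qed
  qed
  have Mu_def': "Mu \<alpha> f x = (SUP cr\<in>{(c, r). 0 < r \<and> x \<in> ball c r}. ereal (V (fst cr) (snd cr)))"
    by (simp add: Mu_def V_def)
  have clos: "ereal (V c r) \<le> Mu \<alpha> f x" if "0 < r" "dist c x \<le> r" for c r
  proof -
    define rn where "rn = (\<lambda>n::nat. r + 1 / real (Suc n))"
    have "rn \<longlonglongrightarrow> r + 0" unfolding rn_def
      by (intro tendsto_add tendsto_const LIMSEQ_Suc[OF lim_const_over_n])
    then have "(\<lambda>n. V c (rn n)) \<longlonglongrightarrow> V c r" using Vlim[OF that(1) tendsto_const, of rn c] by simp
    then have L: "(\<lambda>n. ereal (V c (rn n))) \<longlonglongrightarrow> ereal (V c r)" by (rule tendsto_ereal)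
    have "ereal (V c (rn n)) \<le> Mu \<alpha> f x" for n
    proof -
      have "rn n > r" by (simp add: rn_def)
      then have "(c, rn n) \<in> {(c, r). 0 < r \<and> x \<in> ball c r}" using that by auto
      then show ?thesis unfolding Mu_def' by (rule SUP_upper2) simp
    qed
    then show ?thesis by (intro LIMSEQ_le_const2[OF L]) auto
  qed
  have Mu_eq: "Mu \<alpha> f x = ereal m"
  proof (rule antisym)
    show "Mu \<alpha> f x \<le> ereal m" unfolding Mu_def'
      by (rule SUP_least) (use bound in \<open>auto simp: dist_commute less_imp_le\<close>)
    show "ereal m \<le> Mu \<alpha> f x" unfolding m_def
      using z1(1) d(1) by (intro clos) (auto simp: K_def)
  qed
  define g where "g = (\<lambda>r. V x r)"
  have contg: "continuous_on {\<delta>..R1} g"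
  proof (rule continuous_on_sequentiallyI)
    fix u a assume "\<forall>n. u n \<in> {\<delta>..R1}" "a \<in> {\<delta>..R1}" "u \<longlonglongrightarrow> a"
    then show "(\<lambda>n. g (u n)) \<longlonglongrightarrow> g a"
      unfolding g_def using d(1) by (intro Vlim tendsto_const) auto
  qed
  obtain r1 where r1: "r1 \<in> {\<delta>..R1}" "\<And>r. r \<in> {\<delta>..R1} \<Longrightarrow> g r \<le> g r1"
    using continuous_attains_sup[OF compact_Icc _ contg] dR0 R0R1 by auto
  have gv0: "g r1 \<ge> v0" using r1(2)[of R0] dR0 R0R1 by (simp add: g_def v0_def)
  define S where "S = {r \<in> {\<delta>..R1}. g r = g r1}"
  have cS: "compact S"
  proof -
    have "closed S" unfolding S_def by (rule continuous_closed_preimage_constant[OF contg closed_atLeastAtMost])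
    then have "compact ({\<delta>..R1} \<inter> S)" by (intro compact_Int_closed compact_Icc)
    moreover have "{\<delta>..R1} \<inter> S = S" by (auto simp: S_def)
    ultimately show ?thesis by simp
  qed
  obtain r2 where r2: "r2 \<in> S" "\<And>r. r \<in> S \<Longrightarrow> r \<le> r2"
    using continuous_attains_sup[OF cS _ continuous_on_id] r1(1) by (auto simp: S_def)
  have r2d: "\<delta> \<le> r2" "r2 \<le> R1" "g r2 = g r1" using r2(1) by (auto simp: S_def)
  have gbound: "g r \<le> g r1" if "r > 0" for r
  proof (cases "r < \<delta>")
    case True then show ?thesis using d(2)[OF that True, of x] gv0 that by (simp add: g_def)
  next
    case False
    show ?thesis
    proof (cases "r \<ge> R1")
      case True then show ?thesis using R1(2)[OF True, of x] gv0 by (simp add: g_def)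
    next
      case False2: False
      then show ?thesis using False r1(2)[of r] by simp
    qed
  qed
  have Mc_eq: "Mc \<alpha> f x = ereal (g r2)"
  proof (rule antisym)
    show "Mc \<alpha> f x \<le> ereal (g r2)" unfolding Mc_def
      by (rule SUP_least) (use gbound r2d in \<open>auto simp: g_def V_def\<close>)
    show "ereal (g r2) \<le> Mc \<alpha> f x" unfolding Mc_def
      by (rule SUP_upper2[of r2]) (use r2d d(1) in \<open>auto simp: g_def V_def\<close>)
  qed
  have part1: "\<exists>r>0. ereal (r powr \<alpha> * avg f (ball x r)) = Mc \<alpha> f x \<and>
            (\<forall>s>r. ereal (s powr \<alpha> * avg f (ball x s)) \<noteq> Mc \<alpha> f x)"
  proof (intro exI[of _ r2] conjI allI impI)
    show "r2 > 0" using r2d d(1) by simp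
    show "ereal (r2 powr \<alpha> * avg f (ball x r2)) = Mc \<alpha> f x" by (simp add: Mc_eq g_def V_def)
    fix s assume s: "s > r2"
    show "ereal (s powr \<alpha> * avg f (ball x s)) \<noteq> Mc \<alpha> f x"
    proof
      assume "ereal (s powr \<alpha> * avg f (ball x s)) = Mc \<alpha> f x"
      then have gs: "g s = g r1" using r2d(3) by (simp add: Mc_eq g_def V_def)
      show False
      proof (cases "s \<ge> R1")
        case True then show False using R1(2)[OF True, of x] gv0 gs by (simp add: g_def)
      next
        case False
        then have "s \<in> S" using s r2d gs by (simp add: S_def)
        then show False using r2(2) s by force
      qed
    qed
  qed
  define T where "T = {z \<in> K. V (fst z) (snd z) = m}"
  have cT: "compact T"
  proof -
    have "closed T" unfolding T_def
      by (rule continuous_closed_preimage_constant[OF contK compact_imp_closed[OF cK]])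
    then have "compact (K \<inter> T)" by (intro compact_Int_closed cK)
    moreover have "K \<inter> T = T" by (auto simp: T_def)
    ultimately show ?thesis by simp
  qed
  have z1T: "z1 \<in> T" using z1(1) by (simp add: T_def m_def)
  obtain z2 where z2: "z2 \<in> T" "\<And>z. z \<in> T \<Longrightarrow> snd z \<le> snd z2"
    using continuous_attains_sup[OF cT _ continuous_on_snd[OF continuous_on_id]] z1T by blast
  define c2 where "c2 = fst z2"
  define r2' where "r2' = snd z2"
  have z2K: "\<delta> \<le> r2'" "r2' \<le> R1" "dist c2 x \<le> r2'" "V c2 r2' = m"
    using z2(1) by (auto simp: T_def K_def c2_def r2'_def)
  have part2: "\<exists>c r. 0 < r \<and> x \<in> closure (ball c r) \<and>
            ereal (r powr \<alpha> * avg f (ball c r)) = Mu \<alpha> f x \<and>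
            (\<forall>c' r'. 0 < r' \<and> ball c r \<subset> ball c' r' \<longrightarrow>
                ereal (r' powr \<alpha> * avg f (ball c' r')) < Mu \<alpha> f x)"
  proof (intro exI[of _ c2] exI[of _ r2'] conjI allI impI)
    show r2p: "0 < r2'" using z2K d(1) by simp
    show "x \<in> closure (ball c2 r2')" using r2p z2K by simp
    show "ereal (r2' powr \<alpha> * avg f (ball c2 r2')) = Mu \<alpha> f x"
      using z2K by (simp add: Mu_eq V_def)
    fix c' r' assume h: "0 < r' \<and> ball c2 r2' \<subset> ball c' r'"
    then have hr: "r2' < r'" "dist c2 c' + r2' \<le> r'" using ball_strict[OF r2p] by auto
    have dx: "dist c' x \<le> r'" using hr z2K(3) dist_triangle[of c' x c2] by (simp add: dist_commute)
    have le: "V c' r' \<le> m" using bound[OF _ dx] h by simp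
    have "V c' r' \<noteq> m"
    proof
      assume eq: "V c' r' = m"
      have "\<not> r' < \<delta>" using d(2)[of r' c'] h dx eq mv0 by force
      moreover have "\<not> r' \<ge> R1" using R1(2)[of r' c'] eq mv0 by force
      ultimately have "(c', r') \<in> T" using dx eq by (simp add: T_def K_def)
      then show False using z2(2) hr(1) by (force simp: r2'_def)
    qed
    with le have "V c' r' < m" by simp
    then show "ereal (r' powr \<alpha> * avg f (ball c' r')) < Mu \<alpha> f x"
      by (simp add: Mu_eq V_def)
  qed
  show ?thesis using part1 part2 by blast
qed

end
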